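(* Let $\mathit{VI}$ be a finite set of variables with $\#\mathit{VI}=n$. For all $j,k\in\mathbb{N}$ with $1\le j\le k\le n$, we have $\mathit{TS}_j\subseteq\mathit{TSD}_k$.
   Context: $\mathit{SG}=\wp(\mathit{VI})\setminus\{\emptyset\}$ and $\mathit{SH}=\wp(\mathit{SG})$, ordered by set inclusion. For $S\in\mathit{SG}$, $\mathrm{tuples}_j(S)=\{T\subseteq S\mid \#T=j\}$, and for $sh\in\mathit{SH}$, $\mathrm{tuples}_j(sh)=\bigcup_{S'\in sh}\mathrm{tuples}_j(S')$. Define $\rho_{\mathit{TS}_j}(sh)=\{S\in\mathit{SG}\mid \mathrm{tuples}_j(S)\subseteq\mathrm{tuples}_j(sh)\}$ and $\mathit{TS}_j=\rho_{\mathit{TS}_j}(\mathit{SH})$. Define $\rho_{\mathit{TSD}_k}(sh)=\{\,S\in\mathit{SG}\mid \forall T\subseteq S:\ \#T<k\implies S=\bigcup\{U\in sh\mid T\subseteq U\subseteq S\}\,\}$ and $\mathit{TSD}_k=\rho_{\mathit{TSD}_k}(\mathit{SH})$. *)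

theory Defs
  imports Main
begin

definition SG :: "'a set \<Rightarrow> 'a set set" where
  "SG VI = Pow VI - {{}}"

definition SH :: "'a set \<Rightarrow> 'a set set set" where
  "SH VI = Pow (SG VI)"

definition tuples :: "nat \<Rightarrow> 'a set \<Rightarrow> 'a set set" where
  "tuples j S = {T. T \<subseteq> S \<and> card T = j}"

definition tuples_sh :: "nat \<Rightarrow> 'a set set \<Rightarrow> 'a set set" where
  "tuples_sh j sh = (\<Union>S'\<in>sh. tuples j S')"

definition rho_TS :: "'a set \<Rightarrow> nat \<Rightarrow> 'a set set \<Rightarrow> 'a set set" where
  "rho_TS VI j sh = {S \<in> SG VI. tuples j S \<subseteq> tuples_sh j sh}"

definition TS :: "'a set \<Rightarrow> nat \<Rightarrow> 'a set set set" where
  "TS VI j = rho_TS VI j ` SH VI"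

definition rho_TSD :: "'a set \<Rightarrow> nat \<Rightarrow> 'a set set \<Rightarrow> 'a set set" where
  "rho_TSD VI k sh = {S \<in> SG VI. \<forall>T. T \<subseteq> S \<longrightarrow> card T < k \<longrightarrow>
       S = \<Union>{U \<in> sh. T \<subseteq> U \<and> U \<subseteq> S}}"

definition TSD :: "'a set \<Rightarrow> nat \<Rightarrow> 'a set set set" where
  "TSD VI k = rho_TSD VI k ` SH VI"

end

theory Submission
  imports Defs
begin

lemma fix_pt:
  assumes "1 \<le> j" and "j \<le> k"
  shows "rho_TSD VI k (rho_TS VI j sh) = rho_TS VI j sh"
proof
  show "rho_TS VI j sh \<subseteq> rho_TSD VI k (rho_TS VI j sh)"
  proof
    fix S assume S: "S \<in> rho_TS VI j sh"
    hence "S \<in> SG VI" by (simp add: rho_TS_def)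
    moreover have "\<forall>T. T \<subseteq> S \<longrightarrow> card T < k \<longrightarrow>
       S = \<Union>{U \<in> rho_TS VI j sh. T \<subseteq> U \<and> U \<subseteq> S}"
      using S by blast
    ultimately show "S \<in> rho_TSD VI k (rho_TS VI j sh)" by (simp add: rho_TSD_def)
  qed
next
  show "rho_TSD VI k (rho_TS VI j sh) \<subseteq> rho_TS VI j sh"
  proof
    fix S assume S: "S \<in> rho_TSD VI k (rho_TS VI j sh)"
    hence SG: "S \<in> SG VI" and H: "\<And>T. T \<subseteq> S \<Longrightarrow> card T < k \<Longrightarrow>
       S = \<Union>{U \<in> rho_TS VI j sh. T \<subseteq> U \<and> U \<subseteq> S}"
      by (auto simp: rho_TSD_def)
    have "tuples j S \<subseteq> tuples_sh j sh"
    proof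
      fix T assume T: "T \<in> tuples j S"
      hence TS: "T \<subseteq> S" and cT: "card T = j" by (auto simp: tuples_def)
      with assms have "T \<noteq> {}" by auto
      then obtain x where x: "x \<in> T" by auto
      have fin: "finite T" using cT assms by (metis card.infinite not_one_le_zero)
      have "card (T - {x}) < k" using x fin cT assms by simp
      hence eq: "S = \<Union>{U \<in> rho_TS VI j sh. T - {x} \<subseteq> U \<and> U \<subseteq> S}"
        using H TS by blast
      have "x \<in> S" using x TS by auto
      then obtain U where U: "U \<in> rho_TS VI j sh" "T - {x} \<subseteq> U" "x \<in> U"
        using eq by blast
      hence "T \<subseteq> U" by auto
      hence "T \<in> tuples j U" using cT by (simp add: tuples_def)
      with U(1) show "T \<in> tuples_sh j sh" by (auto simp: rho_TS_def)
    qed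
    thus "S \<in> rho_TS VI j sh" using SG by (simp add: rho_TS_def)
  qed
qed

theorem corollary3p12:
  fixes VI :: "'a set" and n j k :: nat
  assumes "finite VI" and "card VI = n"
    and "1 \<le> j" and "j \<le> k" and "k \<le> n"
  shows "TS VI j \<subseteq> TSD VI k"
proof
  fix X assume "X \<in> TS VI j"
  then obtain sh where sh: "sh \<in> SH VI" "X = rho_TS VI j sh" by (auto simp: TS_def)
  have "X \<in> SH VI" using sh by (auto simp: SH_def rho_TS_def)
  moreover have "X = rho_TSD VI k X" using fix_pt[OF assms(3,4), of VI sh] sh by simp
  ultimately show "X \<in> TSD VI k" unfolding TSD_def by blast
qed

end
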